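(* Let $G=(V,E)$ be a finite simple connected graph of order $n\geq 2$. Then $\alpha_0(S(G)) = n-\beta^*_0(G)$.
   Context: For a finite simple graph $G=(V,E)$, the splitting graph $S(G)$ is obtained from $G$ by adding, for each vertex $v\in V$, a new vertex $v'$, and joining $v'$ to a vertex $u\in V$ if and only if $uv\in E$ (the new vertices are pairwise non-adjacent; the edges of $G$ are kept). $\alpha_0(H)$ denotes the vertex cover number of a graph $H$ (minimum size of a set of vertices meeting every edge). For a graph $G$ of order $n\geq 2$, $\beta_0^*(G):=\max\{|S|-|N(S)| : S \text{ is an independent set of } G\}$, where $N(S)$ is the set of vertices of $G$ adjacent to some vertex of $S$ (the empty set counts as an independent set). *)

theory Defs
  imports Main
begin

definition simple_graph :: "'a set \<Rightarrow> ('a \<Rightarrow> 'a \<Rightarrow> bool) \<Rightarrow> bool" where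
  "simple_graph V E \<longleftrightarrow> finite V \<and> (\<forall>u v. E u v \<longrightarrow> u \<in> V \<and> v \<in> V)
     \<and> (\<forall>u v. E u v \<longrightarrow> E v u) \<and> (\<forall>v. \<not> E v v)"

definition connected_graph :: "'a set \<Rightarrow> ('a \<Rightarrow> 'a \<Rightarrow> bool) \<Rightarrow> bool" where
  "connected_graph V E \<longleftrightarrow> (\<forall>u\<in>V. \<forall>v\<in>V. E\<^sup>*\<^sup>* u v)"

text \<open>Splitting graph S(G): vertices (v,True) are the original vertices,
(v,False) is the new copy v'.  Edges: the edges of G, plus v' -- u whenever uv in E.\<close>
definition split_vertices :: "'a set \<Rightarrow> ('a \<times> bool) set" where
  "split_vertices V = V \<times> UNIV"

definition split_edges :: "('a \<Rightarrow> 'a \<Rightarrow> bool) \<Rightarrow> ('a \<times> bool) \<Rightarrow> ('a \<times> bool) \<Rightarrow> bool" where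
  "split_edges E x y \<longleftrightarrow>
     (snd x \<and> snd y \<and> E (fst x) (fst y))
   \<or> (\<not> snd x \<and> snd y \<and> E (fst x) (fst y))
   \<or> (snd x \<and> \<not> snd y \<and> E (fst x) (fst y))"

definition vertex_cover :: "'a set \<Rightarrow> ('a \<Rightarrow> 'a \<Rightarrow> bool) \<Rightarrow> 'a set \<Rightarrow> bool" where
  "vertex_cover V E C \<longleftrightarrow> C \<subseteq> V \<and> (\<forall>u v. E u v \<longrightarrow> u \<in> C \<or> v \<in> C)"

definition vertex_cover_number :: "'a set \<Rightarrow> ('a \<Rightarrow> 'a \<Rightarrow> bool) \<Rightarrow> nat" where
  "vertex_cover_number V E = Min (card ` {C. vertex_cover V E C})"

definition independent_set :: "'a set \<Rightarrow> ('a \<Rightarrow> 'a \<Rightarrow> bool) \<Rightarrow> 'a set \<Rightarrow> bool" where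
  "independent_set V E S \<longleftrightarrow> S \<subseteq> V \<and> (\<forall>u\<in>S. \<forall>v\<in>S. \<not> E u v)"

definition nbhd :: "'a set \<Rightarrow> ('a \<Rightarrow> 'a \<Rightarrow> bool) \<Rightarrow> 'a set \<Rightarrow> 'a set" where
  "nbhd V E S = {v \<in> V. \<exists>u\<in>S. E u v}"

definition beta0_star :: "'a set \<Rightarrow> ('a \<Rightarrow> 'a \<Rightarrow> bool) \<Rightarrow> int" where
  "beta0_star V E = Max ((\<lambda>S. int (card S) - int (card (nbhd V E S))) ` {S. independent_set V E S})"

end

theory Submission
  imports Defs
begin

lemma card_tf:
  assumes "finite P" "finite Q"
  shows "card ((\<lambda>v. (v, True)) ` P \<union> (\<lambda>v. (v, False)) ` Q) = card P + card Q"
proof -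
  have "card ((\<lambda>v. (v, True)) ` P \<union> (\<lambda>v. (v, False)) ` Q)
        = card ((\<lambda>v. (v, True)) ` P) + card ((\<lambda>v. (v, False)) ` Q)"
    using assms by (intro card_Un_disjoint) auto
  also have "\<dots> = card P + card Q"
    by (subst card_image, simp add: inj_on_def)+ simp
  finally show ?thesis .
qed

theorem corollary1:
  fixes V :: "'a set" and E :: "'a \<Rightarrow> 'a \<Rightarrow> bool"
  assumes "simple_graph V E" and "connected_graph V E" and "card V \<ge> 2"
  shows "int (vertex_cover_number (split_vertices V) (split_edges E)) = int (card V) - beta0_star V E"
proof -
  have finV: "finite V" and EV: "\<And>u v. E u v \<Longrightarrow> u \<in> V \<and> v \<in> V"
    and sym: "\<And>u v. E u v \<Longrightarrow> E v u"
    using assms(1) unfolding simple_graph_def by auto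
  let ?f = "\<lambda>S. int (card S) - int (card (nbhd V E S))"
  let ?I = "{S. independent_set V E S}"
  have finI: "finite ?I"
    by (rule finite_subset[of _ "Pow V"]) (auto simp: independent_set_def finV)
  have "{} \<in> ?I" by (simp add: independent_set_def)
  hence neI: "?f ` ?I \<noteq> {}" by blast
  obtain S where S: "independent_set V E S" and bS: "beta0_star V E = ?f S"
    using Max_in[OF finite_imageI[OF finI] neI] unfolding beta0_star_def by auto
  have bge: "?f A \<le> beta0_star V E" if "independent_set V E A" for A
    unfolding beta0_star_def using finI that by (intro Max_ge) auto
  have finN: "\<And>A. finite (nbhd V E A)" unfolding nbhd_def using finV by simp
  let ?X = "{C. vertex_cover (split_vertices V) (split_edges E) C}"
  have finSV: "finite (split_vertices V)" unfolding split_vertices_def using finV by simp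
  have finX: "finite ?X"
    by (rule finite_subset[of _ "Pow (split_vertices V)"]) (auto simp: vertex_cover_def finSV)
  have SV: "S \<subseteq> V" using S by (simp add: independent_set_def)
  define C0 where "C0 = (\<lambda>v. (v, True)) ` (V - S) \<union> (\<lambda>v. (v, False)) ` nbhd V E S"
  have C0: "vertex_cover (split_vertices V) (split_edges E) C0"
    unfolding vertex_cover_def
  proof
    show "C0 \<subseteq> split_vertices V" unfolding C0_def split_vertices_def nbhd_def by auto
    show "\<forall>u v. split_edges E u v \<longrightarrow> u \<in> C0 \<or> v \<in> C0"
    proof (intro allI impI)
      fix x y assume e: "split_edges E x y"
      obtain a b c d where xy: "x = (a, b)" "y = (c, d)" by fastforce
      show "x \<in> C0 \<or> y \<in> C0"
        using e S EV sym unfolding xy split_edges_def C0_def independent_set_def nbhd_def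
        by (cases b; cases d) (auto simp: image_iff, metis sym)
    qed
  qed
  have cC0: "int (card C0) = int (card V) - beta0_star V E"
  proof -
    have "card S \<le> card V" using SV finV by (simp add: card_mono)
    moreover have "card (V - S) = card V - card S" using SV finV by (simp add: card_Diff_subset finite_subset)
    ultimately show ?thesis
      unfolding C0_def bS using card_tf[of "V - S" "nbhd V E S"] finV finN by simp
  qed
  have lower: "int (card V) - beta0_star V E \<le> int (card C)"
    if C: "vertex_cover (split_vertices V) (split_edges E) C" for C
  proof -
    define A where "A = {v \<in> V. (v, True) \<notin> C}"
    have A: "independent_set V E A"
      using C unfolding A_def independent_set_def vertex_cover_def split_edges_def
      by fastforce
    have AV: "A \<subseteq> V" using A by (simp add: independent_set_def)
    have sub: "(\<lambda>v. (v, True)) ` (V - A) \<union> (\<lambda>v. (v, False)) ` nbhd V E A \<subseteq> C"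
    proof
      fix z assume "z \<in> (\<lambda>v. (v, True)) ` (V - A) \<union> (\<lambda>v. (v, False)) ` nbhd V E A"
      then show "z \<in> C"
      proof
        assume "z \<in> (\<lambda>v. (v, True)) ` (V - A)" thus ?thesis unfolding A_def by auto
      next
        assume "z \<in> (\<lambda>v. (v, False)) ` nbhd V E A"
        then obtain w u where z: "z = (w, False)" and u: "u \<in> A" "E u w"
          unfolding nbhd_def by auto
        have "split_edges E (u, True) (w, False)" using u by (simp add: split_edges_def)
        hence "(u, True) \<in> C \<or> (w, False) \<in> C" using C unfolding vertex_cover_def by blast
        thus ?thesis using u z unfolding A_def by auto
      qed
    qed
    have finC: "finite C" using C finSV unfolding vertex_cover_def by (metis finite_subset)
    have "card (V - A) + card (nbhd V E A) \<le> card C"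
      using card_mono[OF finC sub] card_tf[of "V - A" "nbhd V E A"] finV finN by simp
    hence "int (card V) - int (card A) + int (card (nbhd V E A)) \<le> int (card C)"
      using AV finV by (simp add: card_Diff_subset of_nat_diff card_mono finite_subset)
    thus ?thesis using bge[OF A] by linarith
  qed
  have neX: "card ` ?X \<noteq> {}" using C0 by blast
  obtain C where C: "vertex_cover (split_vertices V) (split_edges E) C"
    and m: "vertex_cover_number (split_vertices V) (split_edges E) = card C"
    using Min_in[OF finite_imageI[OF finX] neX] unfolding vertex_cover_number_def by auto
  have "vertex_cover_number (split_vertices V) (split_edges E) \<le> card C0"
    unfolding vertex_cover_number_def using finX C0 by (intro Min_le) auto
  thus ?thesis using m lower[OF C] cC0 by linarith
qed

end
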